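(* Let $S_N$ be the star graph on $N$ vertices. Then its PIR capacity satisfies $\mathscr{C}(S_N)\le O(N^{-1/2})$ as $N\to\infty$.
   Context: The star graph $S_N$ has $N$ vertices (servers), one of which has degree $N-1$ and the others degree $1$; so there are $K=N-1$ files, file $W_i$ being stored on leaf server $S_i$ and the center server $S_N$. Graph-based PIR model: files are independent, each uniform on $\mathbb{F}_2^L$; a user wants $W_\theta$, $\theta$ uniform on $[K]$ and independent of the files; it sends queries $Q_1,\dots,Q_N$ (independent of the files) to the servers; server $i$ answers $A_i$, a deterministic function of $Q_i$ and the files stored on it. Reliability: $W_\theta$ is determined by all answers and queries. Privacy: $H(\theta\mid Q_i,W_{S_i})=\log K$ for every server $i$, where $W_{S_i}$ is the set of files on server $i$. The rate is $L/\sum_i H(A_i)$; the PIR capacity is the supremum of rates over all schemes and all file lengths $L$. *)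

theory Defs
  imports "HOL-Probability.Probability" "HOL-Library.Landau_Symbols"
begin

definition pmf_entropy :: "'a pmf \<Rightarrow> real" where
  "pmf_entropy p = - (\<Sum>x\<in>set_pmf p. pmf p x * log 2 (pmf p x))"

definition cond_entropy :: "'w pmf \<Rightarrow> ('w \<Rightarrow> 'a) \<Rightarrow> ('w \<Rightarrow> 'b) \<Rightarrow> real" where
  "cond_entropy J X Y =
     pmf_entropy (map_pmf (\<lambda>\<omega>. (X \<omega>, Y \<omega>)) J) - pmf_entropy (map_pmf Y J)"

text \<open>Star graph S_N: servers 1..N, files 1..N-1; file j is on leaf server j
  and on the centre server N.  Set of (indices of) files stored on server i.\<close>
definition star_stored :: "nat \<Rightarrow> nat \<Rightarrow> nat set" where
  "star_stored N i = (if i = N then {1..N-1} else {i})"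

text \<open>The uniform distribution on this finite
  set makes the files independent and uniform.\<close>
definition file_space :: "nat \<Rightarrow> nat \<Rightarrow> (nat \<Rightarrow> bool list) set" where
  "file_space K L = {w. (\<forall>j\<in>{1..K}. length (w j) = L) \<and> (\<forall>j. j \<notin> {1..K} \<longrightarrow> w j = [])}"

definition files_dist :: "nat \<Rightarrow> nat \<Rightarrow> (nat \<Rightarrow> bool list) pmf" where
  "files_dist K L = pmf_of_set (file_space K L)"

text \<open>Restriction of the file tuple to a set of indices (what a server sees).\<close>
definition restrict_files :: "nat set \<Rightarrow> (nat \<Rightarrow> bool list) \<Rightarrow> nat \<Rightarrow> bool list" where
  "restrict_files S w = (\<lambda>j. if j \<in> S then w j else [])"

text \<open>P : joint law of (theta, Q) with Q i the query sent to server i (queries encoded as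
  naturals); finitely supported; theta uniform on [K]; independent of the files
  (the full joint law is pair_pmf P (files_dist K L)).
  ans i q w : answer of server i (encoded as a natural), a deterministic function of
  the query and the files stored on server i.\<close>
definition star_pir_scheme ::
  "nat \<Rightarrow> nat \<Rightarrow> (nat \<times> (nat \<Rightarrow> nat)) pmf \<Rightarrow> (nat \<Rightarrow> nat \<Rightarrow> (nat \<Rightarrow> bool list) \<Rightarrow> nat) \<Rightarrow> bool"
  where
  "star_pir_scheme N L P ans \<longleftrightarrow>
     (let K = N - 1; J = pair_pmf P (files_dist K L) in
      finite (set_pmf P) \<and>
      map_pmf fst P = pmf_of_set {1..K} \<and>
      (\<forall>i\<in>{1..N}. \<forall>q w w'. (\<forall>j\<in>star_stored N i. w j = w' j) \<longrightarrow> ans i q w = ans i q w') \<and>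
      \<comment> \<open>reliability: W_theta is determined by (theta and) all queries and answers\<close>
      (\<exists>dec. \<forall>\<omega>\<in>set_pmf J.
          dec (fst (fst \<omega>), map (snd (fst \<omega>)) [1..<N+1],
               map (\<lambda>i. ans i (snd (fst \<omega>) i) (snd \<omega>)) [1..<N+1])
          = snd \<omega> (fst (fst \<omega>))) \<and>
      \<comment> \<open>privacy: H(theta | Q_i, W_{S_i}) = log K for every server i\<close>
      (\<forall>i\<in>{1..N}.
          cond_entropy J (\<lambda>\<omega>. fst (fst \<omega>))
            (\<lambda>\<omega>. (snd (fst \<omega>) i, restrict_files (star_stored N i) (snd \<omega>)))
          = log 2 (real K)))"

definition star_pir_rate ::
  "nat \<Rightarrow> nat \<Rightarrow> (nat \<times> (nat \<Rightarrow> nat)) pmf \<Rightarrow> (nat \<Rightarrow> nat \<Rightarrow> (nat \<Rightarrow> bool list) \<Rightarrow> nat) \<Rightarrow> real"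
  where
  "star_pir_rate N L P ans =
     real L / (\<Sum>i\<in>{1..N}.
        pmf_entropy (map_pmf (\<lambda>\<omega>. ans i (snd (fst \<omega>) i) (snd \<omega>))
                      (pair_pmf P (files_dist (N - 1) L))))"

definition star_pir_capacity :: "nat \<Rightarrow> real" where
  "star_pir_capacity N =
     Sup {star_pir_rate N L P ans | L P ans. L \<ge> 1 \<and> star_pir_scheme N L P ans}"

end

theory Submission
  imports Defs
begin

definition Hf :: "'a pmf \<Rightarrow> ('a \<Rightarrow> 'b) \<Rightarrow> real" where
  "Hf M f = pmf_entropy (map_pmf f M)"

lemma sum_map_pmf_fin:
  assumes "finite (set_pmf M)"
  shows "(\<Sum>t\<in>set_pmf (map_pmf f M). pmf (map_pmf f M) t * g t) = (\<Sum>\<omega>\<in>set_pmf M. pmf M \<omega> * g (f \<omega>))"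
proof -
  have fin2: "finite (set_pmf (map_pmf f M))" using assms by simp
  have "(\<Sum>t\<in>set_pmf (map_pmf f M). pmf (map_pmf f M) t * g t) = measure_pmf.expectation (map_pmf f M) g"
    by (subst integral_measure_pmf[OF fin2]) auto
  also have "\<dots> = measure_pmf.expectation M (\<lambda>x. g (f x))" by (rule integral_map_pmf)
  also have "\<dots> = (\<Sum>\<omega>\<in>set_pmf M. pmf M \<omega> * g (f \<omega>))"
    by (subst integral_measure_pmf[OF assms]) auto
  finally show ?thesis .
qed

lemma H_alt:
  assumes "finite (set_pmf M)"
  shows "Hf M f = - (\<Sum>\<omega>\<in>set_pmf M. pmf M \<omega> * log 2 (pmf (map_pmf f M) (f \<omega>)))"
  unfolding Hf_def pmf_entropy_def using sum_map_pmf_fin[OF assms, of f "\<lambda>t. log 2 (pmf (map_pmf f M) t)"]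
  by simp

lemma pmf_map_pos: "\<omega> \<in> set_pmf M \<Longrightarrow> pmf (map_pmf f M) (f \<omega>) > 0"
  by (simp add: pmf_positive)

lemma H_nonneg: "Hf M f \<ge> 0"
proof -
  have "(\<Sum>x\<in>set_pmf (map_pmf f M). pmf (map_pmf f M) x * log 2 (pmf (map_pmf f M) x)) \<le> 0"
  proof (rule sum_nonpos)
    fix x assume x: "x \<in> set_pmf (map_pmf f M)"
    hence p: "pmf (map_pmf f M) x > 0" by (simp add: pmf_positive)
    have "log 2 (pmf (map_pmf f M) x) \<le> 0" using p pmf_le_1 by (simp add: log_le_zero_cancel_iff)
    thus "pmf (map_pmf f M) x * log 2 (pmf (map_pmf f M) x) \<le> 0" using p by (simp add: mult_nonneg_nonpos)
  qed
  thus ?thesis unfolding Hf_def pmf_entropy_def by simp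
qed

lemma H_cong: "(\<And>\<omega>. \<omega> \<in> set_pmf M \<Longrightarrow> f \<omega> = g \<omega>) \<Longrightarrow> Hf M f = Hf M g"
  unfolding Hf_def by (metis map_pmf_cong)

lemma pmf_map_fun_le:
  assumes "\<And>\<omega>. \<omega> \<in> set_pmf M \<Longrightarrow> f \<omega> = \<phi> (g \<omega>)" and w: "\<omega> \<in> set_pmf M"
  shows "pmf (map_pmf g M) (g \<omega>) \<le> pmf (map_pmf f M) (f \<omega>)"
proof -
  have "pmf (map_pmf g M) (g \<omega>) = measure_pmf.prob M (g -` {g \<omega>} \<inter> set_pmf M)"
    by (simp add: pmf_map measure_Int_set_pmf)
  also have "\<dots> \<le> measure_pmf.prob M (f -` {f \<omega>})"
  proof (rule measure_pmf.finite_measure_mono)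
    show "g -` {g \<omega>} \<inter> set_pmf M \<subseteq> f -` {f \<omega>}"
      using assms by auto
  qed simp
  also have "\<dots> = pmf (map_pmf f M) (f \<omega>)" by (simp add: pmf_map)
  finally show ?thesis .
qed

lemma H_le_fun:
  assumes fin: "finite (set_pmf M)" and "\<And>\<omega>. \<omega> \<in> set_pmf M \<Longrightarrow> f \<omega> = \<phi> (g \<omega>)"
  shows "Hf M f \<le> Hf M g"
proof -
  have "(\<Sum>\<omega>\<in>set_pmf M. pmf M \<omega> * log 2 (pmf (map_pmf g M) (g \<omega>)))
      \<le> (\<Sum>\<omega>\<in>set_pmf M. pmf M \<omega> * log 2 (pmf (map_pmf f M) (f \<omega>)))"
  proof (rule sum_mono)
    fix \<omega> assume w: "\<omega> \<in> set_pmf M"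
    have "log 2 (pmf (map_pmf g M) (g \<omega>)) \<le> log 2 (pmf (map_pmf f M) (f \<omega>))"
      using pmf_map_fun_le[of M f \<phi> g, OF assms(2) w] pmf_map_pos[OF w, of g] by simp
    thus "pmf M \<omega> * log 2 (pmf (map_pmf g M) (g \<omega>)) \<le> pmf M \<omega> * log 2 (pmf (map_pmf f M) (f \<omega>))"
      by (simp add: mult_left_mono)
  qed
  thus ?thesis by (simp add: H_alt[OF fin])
qed

lemma H_eq_fun:
  assumes fin: "finite (set_pmf M)" and "\<And>\<omega>. \<omega> \<in> set_pmf M \<Longrightarrow> f \<omega> = \<phi> (g \<omega>)"
    and "\<And>\<omega>. \<omega> \<in> set_pmf M \<Longrightarrow> g \<omega> = \<psi> (f \<omega>)"
  shows "Hf M f = Hf M g"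
  using H_le_fun[of M f \<phi> g, OF fin assms(2)] H_le_fun[of M g \<psi> f, OF fin assms(3)] by simp


lemma gibbs:
  assumes fin: "finite (set_pmf M)" and pos: "\<And>\<omega>. \<omega> \<in> set_pmf M \<Longrightarrow> r \<omega> > 0"
    and le1: "(\<Sum>\<omega>\<in>set_pmf M. pmf M \<omega> * r \<omega>) \<le> 1"
  shows "(\<Sum>\<omega>\<in>set_pmf M. pmf M \<omega> * ln (r \<omega>)) \<le> 0"
proof -
  have "(\<Sum>\<omega>\<in>set_pmf M. pmf M \<omega> * ln (r \<omega>)) \<le> (\<Sum>\<omega>\<in>set_pmf M. pmf M \<omega> * (r \<omega> - 1))"
    by (rule sum_mono, rule mult_left_mono) (auto intro: ln_le_minus_one pos)
  also have "\<dots> = (\<Sum>\<omega>\<in>set_pmf M. pmf M \<omega> * r \<omega>) - (\<Sum>\<omega>\<in>set_pmf M. pmf M \<omega>)"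
    by (simp add: algebra_simps sum_subtractf)
  also have "(\<Sum>\<omega>\<in>set_pmf M. pmf M \<omega>) = 1" using sum_pmf_eq_1[OF fin] by simp
  finally show ?thesis using le1 by simp
qed

lemma sum_pmf_fiber:
  assumes fin: "finite (set_pmf M)"
  shows "(\<Sum>b\<in>{b\<in>set_pmf M. snd b = z}. pmf M b) = pmf (map_pmf snd M) z"
proof -
  have "pmf (map_pmf snd M) z = measure_pmf.prob M (snd -` {z} \<inter> set_pmf M)"
    by (simp add: pmf_map measure_Int_set_pmf)
  also have "\<dots> = sum (pmf M) (snd -` {z} \<inter> set_pmf M)"
    using fin by (intro measure_measure_pmf_finite) auto
  also have "snd -` {z} \<inter> set_pmf M = {b\<in>set_pmf M. snd b = z}" by auto
  finally show ?thesis by simp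
qed

lemma H_submod:
  assumes fin: "finite (set_pmf M)"
  shows "Hf M (\<lambda>\<omega>. (f \<omega>, g \<omega>, h \<omega>)) + Hf M h \<le> Hf M (\<lambda>\<omega>. (f \<omega>, h \<omega>)) + Hf M (\<lambda>\<omega>. (g \<omega>, h \<omega>))"
proof -
  define T where "T = (\<lambda>\<omega>. (f \<omega>, g \<omega>, h \<omega>))"
  define pT where "pT = pmf (map_pmf T M)"
  define pxz where "pxz = pmf (map_pmf (\<lambda>\<omega>. (f \<omega>, h \<omega>)) M)"
  define pyz where "pyz = pmf (map_pmf (\<lambda>\<omega>. (g \<omega>, h \<omega>)) M)"
  define pz where "pz = pmf (map_pmf h M)"
  define S where "S = set_pmf (map_pmf T M)"
  define Sxz where "Sxz = set_pmf (map_pmf (\<lambda>\<omega>. (f \<omega>, h \<omega>)) M)"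
  define Syz where "Syz = set_pmf (map_pmf (\<lambda>\<omega>. (g \<omega>, h \<omega>)) M)"
  define G where "G = (\<lambda>(x,y,z). pxz (x,z) * pyz (y,z) / (pT (x,y,z) * pz z))"
  define r where "r = (\<lambda>\<omega>. G (T \<omega>))"
  have finS: "finite S" "finite Sxz" "finite Syz" using fin by (auto simp: S_def Sxz_def Syz_def)
  have posT: "pT (T \<omega>) > 0" "pxz (f \<omega>, h \<omega>) > 0" "pyz (g \<omega>, h \<omega>) > 0" "pz (h \<omega>) > 0"
    if "\<omega> \<in> set_pmf M" for \<omega>
    using that by (auto simp: pT_def pxz_def pyz_def pz_def pmf_positive)
  have rpos: "r \<omega> > 0" if "\<omega> \<in> set_pmf M" for \<omega>
    using posT[OF that] by (simp add: r_def G_def T_def)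
  have A: "(\<Sum>\<omega>\<in>set_pmf M. pmf M \<omega> * r \<omega>) \<le> 1"
  proof -
    have "(\<Sum>\<omega>\<in>set_pmf M. pmf M \<omega> * r \<omega>) = (\<Sum>t\<in>S. pT t * G t)"
      unfolding r_def S_def pT_def by (rule sum_map_pmf_fin[OF fin, symmetric])
    also have "\<dots> = (\<Sum>t\<in>S. (\<lambda>(x,y,z). pxz (x,z) * pyz (y,z) / pz z) t)"
    proof (rule sum.cong[OF refl])
      fix t assume "t \<in> S"
      then obtain \<omega> where w: "\<omega> \<in> set_pmf M" "t = T \<omega>" by (auto simp: S_def)
      show "pT t * G t = (\<lambda>(x,y,z). pxz (x,z) * pyz (y,z) / pz z) t"
        using posT[OF w(1)] w(2) by (auto simp: G_def T_def)
    qed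
    also have "\<dots> \<le> (\<Sum>u\<in>(\<lambda>(a,b). (fst a, fst b, snd a)) ` (SIGMA a:Sxz. {b\<in>Syz. snd b = snd a}).
                      (\<lambda>(x,y,z). pxz (x,z) * pyz (y,z) / pz z) u)"
    proof (rule sum_mono2)
      show "finite ((\<lambda>(a,b). (fst a, fst b, snd a)) ` (SIGMA a:Sxz. {b\<in>Syz. snd b = snd a}))"
        using finS by auto
      show "S \<subseteq> (\<lambda>(a,b). (fst a, fst b, snd a)) ` (SIGMA a:Sxz. {b\<in>Syz. snd b = snd a})"
      proof
        fix t assume "t \<in> S"
        then obtain \<omega> where w: "\<omega> \<in> set_pmf M" "t = T \<omega>" by (auto simp: S_def)
        have "((f \<omega>, h \<omega>), (g \<omega>, h \<omega>)) \<in> (SIGMA a:Sxz. {b\<in>Syz. snd b = snd a})"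
          using w by (auto simp: Sxz_def Syz_def)
        then show "t \<in> (\<lambda>(a,b). (fst a, fst b, snd a)) ` (SIGMA a:Sxz. {b\<in>Syz. snd b = snd a})"
          using w by (force simp: T_def)
      qed
      show "0 \<le> (\<lambda>(x,y,z). pxz (x,z) * pyz (y,z) / pz z) u" for u
        by (auto simp: case_prod_beta pxz_def pyz_def pz_def)
    qed
    also have "\<dots> = (\<Sum>(a,b)\<in>(SIGMA a:Sxz. {b\<in>Syz. snd b = snd a}). pxz a * pyz b / pz (snd a))"
      by (subst sum.reindex) (auto simp: inj_on_def case_prod_beta intro!: sum.cong)
    also have "\<dots> = (\<Sum>a\<in>Sxz. \<Sum>b\<in>{b\<in>Syz. snd b = snd a}. pxz a * pyz b / pz (snd a))"
      by (subst sum.Sigma) (use finS in auto)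
    also have "\<dots> = (\<Sum>a\<in>Sxz. pxz a / pz (snd a) * (\<Sum>b\<in>{b\<in>Syz. snd b = snd a}. pyz b))"
      by (simp add: sum_distrib_left)
    also have "\<dots> = (\<Sum>a\<in>Sxz. pxz a)"
    proof (rule sum.cong[OF refl])
      fix a assume a: "a \<in> Sxz"
      then obtain \<omega> where w: "\<omega> \<in> set_pmf M" "a = (f \<omega>, h \<omega>)" by (auto simp: Sxz_def)
      have "(\<Sum>b\<in>{b\<in>Syz. snd b = snd a}. pyz b) = pmf (map_pmf snd (map_pmf (\<lambda>\<omega>. (g \<omega>, h \<omega>)) M)) (snd a)"
        unfolding Syz_def pyz_def by (rule sum_pmf_fiber) (use fin in simp)
      also have "\<dots> = pz (snd a)" by (simp add: pz_def pmf.map_comp o_def)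
      finally show "pxz a / pz (snd a) * (\<Sum>b\<in>{b\<in>Syz. snd b = snd a}. pyz b) = pxz a"
        using posT[OF w(1)] w(2) by simp
    qed
    also have "\<dots> = 1" unfolding pxz_def Sxz_def by (rule sum_pmf_eq_1) (use finS Sxz_def in auto)
    finally show ?thesis .
  qed
  have B: "(\<Sum>\<omega>\<in>set_pmf M. pmf M \<omega> * ln (r \<omega>)) \<le> 0" by (rule gibbs[OF fin rpos A])
  have eq: "log 2 (r \<omega>) = log 2 (pxz (f \<omega>, h \<omega>)) + log 2 (pyz (g \<omega>, h \<omega>)) - log 2 (pT (T \<omega>)) - log 2 (pz (h \<omega>))"
    if "\<omega> \<in> set_pmf M" for \<omega>
    using posT[OF that] by (simp add: r_def G_def T_def log_mult log_divide)
  have "Hf M (\<lambda>\<omega>. (f \<omega>, h \<omega>)) + Hf M (\<lambda>\<omega>. (g \<omega>, h \<omega>)) - Hf M T - Hf M h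
      = (\<Sum>\<omega>\<in>set_pmf M. pmf M \<omega> * log 2 (pT (T \<omega>))) + (\<Sum>\<omega>\<in>set_pmf M. pmf M \<omega> * log 2 (pz (h \<omega>)))
        - (\<Sum>\<omega>\<in>set_pmf M. pmf M \<omega> * log 2 (pxz (f \<omega>, h \<omega>))) - (\<Sum>\<omega>\<in>set_pmf M. pmf M \<omega> * log 2 (pyz (g \<omega>, h \<omega>)))"
    by (simp add: H_alt[OF fin] pT_def pz_def pxz_def pyz_def)
  also have "\<dots> = - (\<Sum>\<omega>\<in>set_pmf M. pmf M \<omega> * log 2 (r \<omega>))"
    by (simp add: eq algebra_simps sum.distrib sum_subtractf sum_negf cong: sum.cong)
  also have "\<dots> = - (\<Sum>\<omega>\<in>set_pmf M. pmf M \<omega> * ln (r \<omega>)) / ln 2"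
    by (simp add: log_def sum_divide_distrib)
  also have "\<dots> \<ge> 0" using B by (simp add: divide_nonpos_pos)
  finally show ?thesis by (simp add: T_def)
qed

lemma H_const: "Hf M (\<lambda>_. c) = 0"
  by (simp add: Hf_def pmf_entropy_def map_pmf_const)

lemma H_cond_mono:
  assumes fin: "finite (set_pmf M)" and det: "\<And>\<omega>. \<omega> \<in> set_pmf M \<Longrightarrow> g \<omega> = \<phi> (g' \<omega>)"
  shows "Hf M (\<lambda>\<omega>. (f \<omega>, g' \<omega>)) - Hf M g' \<le> Hf M (\<lambda>\<omega>. (f \<omega>, g \<omega>)) - Hf M g"
proof -
  have s: "Hf M (\<lambda>\<omega>. (f \<omega>, g' \<omega>, g \<omega>)) + Hf M g \<le> Hf M (\<lambda>\<omega>. (f \<omega>, g \<omega>)) + Hf M (\<lambda>\<omega>. (g' \<omega>, g \<omega>))"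
    by (rule H_submod[OF fin])
  have e1: "Hf M (\<lambda>\<omega>. (f \<omega>, g' \<omega>, g \<omega>)) = Hf M (\<lambda>\<omega>. (f \<omega>, g' \<omega>))"
    by (rule H_eq_fun[OF fin, where \<phi>="\<lambda>(a,b). (a,b,\<phi> b)" and \<psi>="\<lambda>(a,b,c). (a,b)"]) (auto simp: det)
  have e2: "Hf M (\<lambda>\<omega>. (g' \<omega>, g \<omega>)) = Hf M g'"
    by (rule H_eq_fun[OF fin, where \<phi>="\<lambda>b. (b,\<phi> b)" and \<psi>=fst]) (auto simp: det)
  show ?thesis using s e1 e2 by simp
qed

lemma H_subadd:
  assumes fin: "finite (set_pmf M)"
  shows "Hf M (\<lambda>\<omega>. (f \<omega>, g \<omega>)) \<le> Hf M f + Hf M g"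
proof -
  have "Hf M (\<lambda>\<omega>. (f \<omega>, g \<omega>)) - Hf M g \<le> Hf M (\<lambda>\<omega>. (f \<omega>, ())) - Hf M (\<lambda>_. ())"
    by (rule H_cond_mono[OF fin, where \<phi>="\<lambda>_. ()"]) auto
  also have "Hf M (\<lambda>\<omega>. (f \<omega>, ())) = Hf M f"
    by (rule H_eq_fun[OF fin, where \<psi>=fst and \<phi>="\<lambda>a. (a,())"]) auto
  finally show ?thesis by (simp add: H_const)
qed

lemma H_le_pair: 
  assumes fin: "finite (set_pmf M)"
  shows "Hf M g \<le> Hf M (\<lambda>\<omega>. (f \<omega>, g \<omega>))"
  by (rule H_le_fun[OF fin, of _ snd]) auto

lemma entropy_pair_pmf:
  assumes "finite (set_pmf A)" "finite (set_pmf B)"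
  shows "pmf_entropy (pair_pmf A B) = pmf_entropy A + pmf_entropy B"
proof -
  have sA: "(\<Sum>a\<in>set_pmf A. pmf A a) = 1" by (rule sum_pmf_eq_1) (use assms in auto)
  have sB: "(\<Sum>b\<in>set_pmf B. pmf B b) = 1" by (rule sum_pmf_eq_1) (use assms in auto)
  have "(\<Sum>x\<in>set_pmf (pair_pmf A B). pmf (pair_pmf A B) x * log 2 (pmf (pair_pmf A B) x))
     = (\<Sum>a\<in>set_pmf A. \<Sum>b\<in>set_pmf B. pmf A a * pmf B b * log 2 (pmf A a * pmf B b))"
    by (simp add: set_pair_pmf sum.cartesian_product) (auto simp: pmf_pair intro!: sum.cong)
  also have "\<dots> = (\<Sum>a\<in>set_pmf A. \<Sum>b\<in>set_pmf B. pmf B b * (pmf A a * log 2 (pmf A a)) + pmf A a * (pmf B b * log 2 (pmf B b)))"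
    by (intro sum.cong refl) (simp add: log_mult pmf_positive algebra_simps)
  also have "\<dots> = (\<Sum>a\<in>set_pmf A. pmf A a * log 2 (pmf A a)) + (\<Sum>b\<in>set_pmf B. pmf B b * log 2 (pmf B b))"
    by (simp add: sum.distrib sum_distrib_left[symmetric] sum_distrib_right[symmetric] sA sB
        sum.swap[of "\<lambda>a b. pmf A a * (pmf B b * log 2 (pmf B b))"])
  finally show ?thesis by (simp add: pmf_entropy_def)
qed

lemma H_pair:
  assumes "finite (set_pmf A)" "finite (set_pmf B)"
  shows "Hf (pair_pmf A B) (\<lambda>\<omega>. (f (fst \<omega>), g (snd \<omega>))) = Hf A f + Hf B g"
proof -
  have "map_pmf (\<lambda>\<omega>. (f (fst \<omega>), g (snd \<omega>))) (pair_pmf A B) = pair_pmf (map_pmf f A) (map_pmf g B)"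
    by (subst map_pair[symmetric]) (simp add: case_prod_beta')
  thus ?thesis using assms by (simp add: Hf_def entropy_pair_pmf)
qed

lemma H_fst: "Hf (pair_pmf A B) (\<lambda>\<omega>. f (fst \<omega>)) = Hf A f"
proof -
  have "map_pmf (\<lambda>\<omega>. f (fst \<omega>)) (pair_pmf A B) = map_pmf f (map_pmf fst (pair_pmf A B))"
    by (simp add: pmf.map_comp o_def)
  thus ?thesis by (simp add: Hf_def map_fst_pair_pmf)
qed

lemma H_snd: "Hf (pair_pmf A B) (\<lambda>\<omega>. f (snd \<omega>)) = Hf B f"
proof -
  have "map_pmf (\<lambda>\<omega>. f (snd \<omega>)) (pair_pmf A B) = map_pmf f (map_pmf snd (pair_pmf A B))"
    by (simp add: pmf.map_comp o_def)
  thus ?thesis by (simp add: Hf_def map_snd_pair_pmf)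
qed

lemma entropy_uniform:
  assumes "finite S" "S \<noteq> {}"
  shows "pmf_entropy (pmf_of_set S) = log 2 (real (card S))"
proof -
  have c: "card S > 0" using assms by (simp add: card_gt_0_iff)
  have "(\<Sum>x\<in>S. 1 / real (card S) * log 2 (1 / real (card S))) = - log 2 (real (card S))"
    using c by (simp add: log_divide)
  thus ?thesis using assms by (simp add: pmf_entropy_def)
qed

lemma H_indep_eq:
  assumes fin: "finite (set_pmf M)" and eq: "Hf M (\<lambda>\<omega>. (f \<omega>, g \<omega>)) = Hf M f + Hf M g"
  shows "pmf (map_pmf (\<lambda>\<omega>. (f \<omega>, g \<omega>)) M) (a, b) = pmf (map_pmf f M) a * pmf (map_pmf g M) b"
proof -
  define pxy where "pxy = pmf (map_pmf (\<lambda>\<omega>. (f \<omega>, g \<omega>)) M)"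
  define px where "px = pmf (map_pmf f M)"
  define py where "py = pmf (map_pmf g M)"
  define Sxy where "Sxy = set_pmf (map_pmf (\<lambda>\<omega>. (f \<omega>, g \<omega>)) M)"
  define Sx where "Sx = set_pmf (map_pmf f M)"
  define Sy where "Sy = set_pmf (map_pmf g M)"
  define r where "r = (\<lambda>\<omega>. px (f \<omega>) * py (g \<omega>) / pxy (f \<omega>, g \<omega>))"
  have fins: "finite Sxy" "finite Sx" "finite Sy" using fin by (auto simp: Sxy_def Sx_def Sy_def)
  have pos: "px (f \<omega>) > 0" "py (g \<omega>) > 0" "pxy (f \<omega>, g \<omega>) > 0" if "\<omega> \<in> set_pmf M" for \<omega>
    using that by (auto simp: px_def py_def pxy_def pmf_positive)
  have rpos: "r \<omega> > 0" if "\<omega> \<in> set_pmf M" for \<omega> using pos[OF that] by (simp add: r_def)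
  have sub: "Sxy \<subseteq> Sx \<times> Sy" by (auto simp: Sxy_def Sx_def Sy_def)
  have prod1: "(\<Sum>t\<in>Sx \<times> Sy. px (fst t) * py (snd t)) = 1"
  proof -
    have "(\<Sum>t\<in>Sx \<times> Sy. px (fst t) * py (snd t)) = (\<Sum>x\<in>Sx. px x) * (\<Sum>y\<in>Sy. py y)"
      by (simp add: sum_product sum.cartesian_product case_prod_beta)
    also have "\<dots> = 1" using fins
      by (simp add: px_def py_def Sx_def Sy_def sum_pmf_eq_1)
    finally show ?thesis .
  qed
  have sumr: "(\<Sum>\<omega>\<in>set_pmf M. pmf M \<omega> * r \<omega>) = (\<Sum>t\<in>Sxy. px (fst t) * py (snd t))"
  proof -
    define G where "G = (\<lambda>t. px (fst t) * py (snd t) / pxy t)"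
    have "(\<Sum>\<omega>\<in>set_pmf M. pmf M \<omega> * r \<omega>) = (\<Sum>\<omega>\<in>set_pmf M. pmf M \<omega> * G (f \<omega>, g \<omega>))"
      by (simp add: r_def G_def)
    also have "\<dots> = (\<Sum>t\<in>Sxy. pxy t * G t)"
      unfolding Sxy_def pxy_def by (rule sum_map_pmf_fin[OF fin, symmetric])
    also have "\<dots> = (\<Sum>t\<in>Sxy. px (fst t) * py (snd t))"
    proof (rule sum.cong[OF refl])
      fix t assume "t \<in> Sxy"
      hence "pxy t > 0" unfolding Sxy_def pxy_def by (rule pmf_positive)
      thus "pxy t * G t = px (fst t) * py (snd t)" by (simp add: G_def)
    qed
    finally show ?thesis .
  qed
  have le1: "(\<Sum>t\<in>Sxy. px (fst t) * py (snd t)) \<le> 1"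
    using prod1 sum_mono2[OF _ sub, of "\<lambda>t. px (fst t) * py (snd t)"] fins
    by (simp add: px_def py_def)
  have lnsum: "(\<Sum>\<omega>\<in>set_pmf M. pmf M \<omega> * ln (r \<omega>)) = 0"
  proof -
    have eqr: "ln (r \<omega>) = ln 2 * (log 2 (px (f \<omega>)) + log 2 (py (g \<omega>)) - log 2 (pxy (f \<omega>, g \<omega>)))"
      if "\<omega> \<in> set_pmf M" for \<omega>
      using pos[OF that] by (simp add: r_def ln_mult ln_div log_def algebra_simps)
    have "(\<Sum>\<omega>\<in>set_pmf M. pmf M \<omega> * ln (r \<omega>))
        = ln 2 * ((\<Sum>\<omega>\<in>set_pmf M. pmf M \<omega> * log 2 (px (f \<omega>))) + (\<Sum>\<omega>\<in>set_pmf M. pmf M \<omega> * log 2 (py (g \<omega>)))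
             - (\<Sum>\<omega>\<in>set_pmf M. pmf M \<omega> * log 2 (pxy (f \<omega>, g \<omega>))))"
      by (simp add: eqr sum_distrib_left sum.distrib sum_subtractf algebra_simps cong: sum.cong)
    also have "\<dots> = ln 2 * (- Hf M f - Hf M g + Hf M (\<lambda>\<omega>. (f \<omega>, g \<omega>)))"
      by (simp add: H_alt[OF fin] px_def py_def pxy_def)
    also have "\<dots> = 0" using eq by simp
    finally show ?thesis .
  qed
  have zero: "(\<Sum>\<omega>\<in>set_pmf M. pmf M \<omega> * (r \<omega> - 1 - ln (r \<omega>))) = 0"
  proof (rule antisym)
    have "(\<Sum>\<omega>\<in>set_pmf M. pmf M \<omega> * (r \<omega> - 1 - ln (r \<omega>)))
       = (\<Sum>\<omega>\<in>set_pmf M. pmf M \<omega> * r \<omega>) - (\<Sum>\<omega>\<in>set_pmf M. pmf M \<omega>) - (\<Sum>\<omega>\<in>set_pmf M. pmf M \<omega> * ln (r \<omega>))"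
      by (simp add: algebra_simps sum_subtractf sum.distrib)
    also have "\<dots> \<le> 0" using sumr le1 lnsum sum_pmf_eq_1[OF fin, of M] by simp
    finally show "(\<Sum>\<omega>\<in>set_pmf M. pmf M \<omega> * (r \<omega> - 1 - ln (r \<omega>))) \<le> 0" .
  next
    show "0 \<le> (\<Sum>\<omega>\<in>set_pmf M. pmf M \<omega> * (r \<omega> - 1 - ln (r \<omega>)))"
      by (intro sum_nonneg mult_nonneg_nonneg) (auto dest: ln_le_minus_one[OF rpos])
  qed
  have r1: "r \<omega> = 1" if w: "\<omega> \<in> set_pmf M" for \<omega>
  proof -
    have nn: "\<And>x. x \<in> set_pmf M \<Longrightarrow> 0 \<le> pmf M x * (r x - 1 - ln (r x))"
      using ln_le_minus_one[OF rpos] by (simp add: mult_nonneg_nonneg)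
    have "pmf M \<omega> * (r \<omega> - 1 - ln (r \<omega>)) = 0"
      using zero w sum_nonneg_eq_0_iff[OF fin, of "\<lambda>\<omega>. pmf M \<omega> * (r \<omega> - 1 - ln (r \<omega>))"] nn
      by blast
    moreover have "pmf M \<omega> > 0" using w by (rule pmf_positive)
    ultimately have "ln (r \<omega>) = r \<omega> - 1" by simp
    thus ?thesis using ln_eq_minus_one rpos[OF w] by blast
  qed
  have onS: "pxy t = px (fst t) * py (snd t)" if "t \<in> Sxy" for t
  proof -
    obtain \<omega> where w: "\<omega> \<in> set_pmf M" "t = (f \<omega>, g \<omega>)" using \<open>t \<in> Sxy\<close> by (auto simp: Sxy_def)
    show ?thesis using r1[OF w(1)] pos[OF w(1)] w(2) by (simp add: r_def)
  qed
  have sumS: "(\<Sum>t\<in>Sxy. px (fst t) * py (snd t)) = 1"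
  proof -
    have "(\<Sum>t\<in>Sxy. px (fst t) * py (snd t)) = (\<Sum>t\<in>Sxy. pxy t)" using onS by simp
    also have "\<dots> = 1" unfolding pxy_def Sxy_def by (rule sum_pmf_eq_1) (use fins Sxy_def in auto)
    finally show ?thesis .
  qed
  have diff0: "(\<Sum>t\<in>(Sx \<times> Sy) - Sxy. px (fst t) * py (snd t)) = 0"
    using sum.subset_diff[OF sub, of "\<lambda>t. px (fst t) * py (snd t)"] fins prod1 sumS by simp
  show ?thesis
  proof (cases "(a,b) \<in> Sxy")
    case True then show ?thesis using onS[OF True] by (simp add: pxy_def px_def py_def)
  next
    case False
    hence z: "pxy (a,b) = 0" unfolding Sxy_def pxy_def by (meson set_pmf_iff)
    show ?thesis
    proof (cases "(a,b) \<in> Sx \<times> Sy")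
      case True
      hence "(a,b) \<in> (Sx \<times> Sy) - Sxy" using False by simp
      moreover have "\<forall>t\<in>(Sx \<times> Sy) - Sxy. px (fst t) * py (snd t) = 0"
        using diff0 sum_nonneg_eq_0_iff[of "(Sx \<times> Sy) - Sxy" "\<lambda>t. px (fst t) * py (snd t)"] fins
        by (simp add: px_def py_def)
      ultimately have "px a * py b = 0" by force
      then show ?thesis using z by (simp add: pxy_def px_def py_def)
    next
      case False
      hence "px a = 0 \<or> py b = 0" unfolding Sx_def Sy_def px_def py_def by (meson SigmaI set_pmf_iff)
      then show ?thesis using z by (auto simp: pxy_def px_def py_def)
    qed
  qed
qed

lemma cond_marginal:
  assumes fin: "finite (set_pmf P)"
    and indep: "\<And>b. pmf (map_pmf (\<lambda>\<omega>. (u \<omega>, v \<omega>)) P) (k, b) = pmf (map_pmf u P) k * pmf (map_pmf v P) b"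
    and nz: "pmf (map_pmf u P) k > 0"
  shows "map_pmf v (cond_pmf P {\<omega>. u \<omega> = k}) = map_pmf v P"
proof (rule pmf_eqI)
  fix b
  define A where "A = {\<omega>. u \<omega> = k}"
  have mA: "measure_pmf.prob P A = pmf (map_pmf u P) k" by (simp add: pmf_map A_def vimage_def)
  have ne: "set_pmf P \<inter> A \<noteq> {}"
  proof
    assume "set_pmf P \<inter> A = {}"
    hence "measure_pmf.prob P A = 0" by (simp add: measure_pmf_zero_iff Int_commute)
    thus False using mA nz by simp
  qed
  have finC: "finite (set_pmf (cond_pmf P A))" using fin ne by (simp add: set_cond_pmf)
  have "pmf (map_pmf v (cond_pmf P A)) b = measure_pmf.prob (cond_pmf P A) (v -` {b} \<inter> set_pmf (cond_pmf P A))"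
    by (simp add: pmf_map measure_Int_set_pmf)
  also have "\<dots> = (\<Sum>x\<in>v -` {b} \<inter> (set_pmf P \<inter> A). pmf (cond_pmf P A) x)"
    using finC ne by (subst measure_measure_pmf_finite) (auto simp: set_cond_pmf)
  also have "\<dots> = (\<Sum>x\<in>v -` {b} \<inter> (set_pmf P \<inter> A). pmf P x / measure_pmf.prob P A)"
    using ne by (intro sum.cong refl) (auto simp: pmf_cond)
  also have "\<dots> = (\<Sum>x\<in>v -` {b} \<inter> A \<inter> set_pmf P. pmf P x) / measure_pmf.prob P A"
    by (simp add: sum_divide_distrib Int_ac)
  also have "(\<Sum>x\<in>v -` {b} \<inter> A \<inter> set_pmf P. pmf P x) = measure_pmf.prob P (v -` {b} \<inter> A)"
    using fin by (subst measure_Int_set_pmf[symmetric], subst measure_measure_pmf_finite) auto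
  also have "measure_pmf.prob P (v -` {b} \<inter> A) = pmf (map_pmf (\<lambda>\<omega>. (u \<omega>, v \<omega>)) P) (k, b)"
    by (simp add: pmf_map A_def vimage_def conj_commute Collect_conj_eq[symmetric])
  finally show "pmf (map_pmf v (cond_pmf P A)) b = pmf (map_pmf v P) b"
    using indep mA nz by simp
qed

lemma Hf_map: "Hf (map_pmf g M) h = Hf M (\<lambda>x. h (g x))"
  by (simp add: Hf_def pmf.map_comp o_def)

definition blists :: "nat \<Rightarrow> bool list set" where "blists L = {xs. length xs = L}"

lemma blists_fin: "finite (blists L)"
proof -
  have "blists L = {xs. set xs \<subseteq> UNIV \<and> length xs = L}" by (simp add: blists_def)
  thus ?thesis using finite_lists_length_eq[of "UNIV::bool set" L] by simp
qed

lemma blists_card: "card (blists L) = 2 ^ L"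
proof -
  have "blists L = {xs. set xs \<subseteq> UNIV \<and> length xs = L}" by (simp add: blists_def)
  thus ?thesis using card_lists_length_eq[of "UNIV::bool set" L] by simp
qed

lemma blists_ne: "blists L \<noteq> {}"
  using blists_card[of L] by (metis card.empty power_not_zero zero_neq_numeral)

lemma file_space_PiE: "file_space K L = PiE_dflt {1..K} [] (\<lambda>_. blists L)"
  by (auto simp: file_space_def PiE_dflt_def blists_def)

lemma files_dist_Pi: "files_dist K L = Pi_pmf {1..K} [] (\<lambda>_. pmf_of_set (blists L))"
  unfolding files_dist_def file_space_PiE
  by (rule Pi_pmf_of_set[symmetric]) (auto simp: blists_fin blists_ne)

lemma files_dist_fin: "finite (set_pmf (files_dist K L))"
proof -
  have "set_pmf (files_dist K L) \<subseteq> PiE_dflt {1..K} [] (set_pmf \<circ> (\<lambda>_. pmf_of_set (blists L)))"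
    unfolding files_dist_Pi by (rule set_Pi_pmf_subset') simp
  moreover have "finite (PiE_dflt {1..K} [] (set_pmf \<circ> (\<lambda>_. pmf_of_set (blists L))))"
    by (rule finite_PiE_dflt) (auto simp: blists_fin blists_ne)
  ultimately show ?thesis by (rule finite_subset)
qed

lemma entropy_blists: "pmf_entropy (pmf_of_set (blists L)) = real L"
  by (simp add: entropy_uniform blists_fin blists_ne blists_card)

lemma files_add_one:
  assumes k: "k \<in> {1..K}" "k \<notin> U"
  shows "Hf (files_dist K L) (\<lambda>w. (restrict_files U w, w k)) = Hf (files_dist K L) (restrict_files U) + real L"
proof -
  define p where "p = (\<lambda>_::nat. pmf_of_set (blists L))"
  define A where "A = {1..K} - {k}"
  define F' where "F' = Pi_pmf A [] p"
  have ins: "{1..K} = insert k A" using k by (auto simp: A_def)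
  have F: "files_dist K L = map_pmf (\<lambda>(y,f). f(k:=y)) (pair_pmf (p k) F')"
    unfolding files_dist_Pi F'_def p_def ins by (rule Pi_pmf_insert) (auto simp: A_def)
  have finF': "finite (set_pmf F')"
  proof -
    have "set_pmf F' \<subseteq> PiE_dflt A [] (set_pmf \<circ> p)"
      unfolding F'_def by (rule set_Pi_pmf_subset') (simp add: A_def)
    moreover have "finite (PiE_dflt A [] (set_pmf \<circ> p))"
      by (rule finite_PiE_dflt) (auto simp: A_def p_def blists_fin blists_ne)
    ultimately show ?thesis by (rule finite_subset)
  qed
  have finp: "finite (set_pmf (p k))" by (simp add: p_def blists_fin blists_ne)
  have r: "restrict_files U (f(k:=y)) = restrict_files U f" for f y
    using k by (auto simp: restrict_files_def fun_eq_iff)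
  have "Hf (files_dist K L) (\<lambda>w. (restrict_files U w, w k))
      = Hf (pair_pmf (p k) F') (\<lambda>\<omega>. (restrict_files U (snd \<omega>), fst \<omega>))"
    unfolding F Hf_map by (rule H_cong) (auto simp: r)
  also have "\<dots> = Hf (pair_pmf (p k) F') (\<lambda>\<omega>. (fst \<omega>, restrict_files U (snd \<omega>)))"
    by (rule H_eq_fun[where \<phi>="\<lambda>(a,b). (b,a)" and \<psi>="\<lambda>(a,b). (b,a)"]) (auto simp: finp finF' set_pair_pmf)
  also have "\<dots> = Hf (p k) (\<lambda>x. x) + Hf F' (restrict_files U)"
    by (rule H_pair[OF finp finF'])
  also have "Hf (p k) (\<lambda>x. x) = real L" by (simp add: Hf_def p_def entropy_blists)
  also have "Hf F' (restrict_files U) = Hf (files_dist K L) (restrict_files U)"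
  proof -
    have "Hf (files_dist K L) (restrict_files U) = Hf (pair_pmf (p k) F') (\<lambda>\<omega>. restrict_files U (snd \<omega>))"
      unfolding F Hf_map by (rule H_cong) (auto simp: r)
    also have "\<dots> = Hf F' (restrict_files U)" by (rule H_snd)
    finally show ?thesis by simp
  qed
  finally show ?thesis by simp
qed

lemma H_family:
  assumes fin: "finite (set_pmf M)" and S: "finite S"
  shows "Hf M (\<lambda>\<omega>. (\<lambda>j. if j \<in> S then F j \<omega> else c)) \<le> (\<Sum>j\<in>S. Hf M (F j))"
  using S
proof (induction S rule: finite_induct)
  case empty
  then show ?case by (simp add: H_const)
next
  case (insert j S)
  have "Hf M (\<lambda>\<omega>. (\<lambda>i. if i \<in> insert j S then F i \<omega> else c))
      \<le> Hf M (\<lambda>\<omega>. (F j \<omega>, (\<lambda>i. if i \<in> S then F i \<omega> else c)))"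
    by (rule H_le_fun[OF fin, where \<phi>="\<lambda>(a,g). g(j:=a)"]) (auto simp: fun_eq_iff)
  also have "\<dots> \<le> Hf M (F j) + Hf M (\<lambda>\<omega>. (\<lambda>i. if i \<in> S then F i \<omega> else c))"
    by (rule H_subadd[OF fin])
  also have "\<dots> \<le> Hf M (F j) + (\<Sum>i\<in>S. Hf M (F i))" using insert.IH by simp
  finally show ?case using insert.hyps by simp
qed

definition Hc :: "nat \<Rightarrow> (nat \<Rightarrow> nat \<Rightarrow> (nat \<Rightarrow> bool list) \<Rightarrow> nat) \<Rightarrow> ((nat \<Rightarrow> nat) \<times> (nat \<Rightarrow> bool list)) pmf \<Rightarrow> nat set \<Rightarrow> real" where
  "Hc N ans M S = Hf M (\<lambda>\<omega>. (ans N (fst \<omega> N) (snd \<omega>), fst \<omega> N, restrict_files S (snd \<omega>)))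
                 - Hf M (\<lambda>\<omega>. (fst \<omega> N, restrict_files S (snd \<omega>)))"

lemma per_k:
  fixes \<pi> :: "(nat \<Rightarrow> nat) pmf" and ans :: "nat \<Rightarrow> nat \<Rightarrow> (nat \<Rightarrow> bool list) \<Rightarrow> nat"
  assumes finpi: "finite (set_pmf \<pi>)"
    and NK: "N = Suc K"
    and stored: "\<forall>i\<in>{1..N}. \<forall>q w w'. (\<forall>j\<in>star_stored N i. w j = w' j) \<longrightarrow> ans i q w = ans i q w'"
    and decode: "\<forall>\<omega>\<in>set_pmf (pair_pmf \<pi> (files_dist K L)).
        dec (k, map (fst \<omega>) [1..<N+1], map (\<lambda>i. ans i (fst \<omega> i) (snd \<omega>)) [1..<N+1]) = snd \<omega> k"
    and k: "k \<in> {1..K}" "k \<notin> U" and U: "U \<subseteq> {1..K}"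
  shows "Hc N ans (pair_pmf \<pi> (files_dist K L)) U - Hc N ans (pair_pmf \<pi> (files_dist K L)) (insert k U)
         \<ge> real L - (\<Sum>j\<in>{1..K} - U. Hf (pair_pmf \<pi> (files_dist K L)) (\<lambda>\<omega>. ans j (fst \<omega> j) (snd \<omega>)))"
proof -
  define F where "F = files_dist K L"
  define M where "M = pair_pmf \<pi> F"
  have finF: "finite (set_pmf F)" by (simp add: F_def files_dist_fin)
  have fin: "finite (set_pmf M)" using finpi finF by (simp add: M_def set_pair_pmf)
  define V where "V = {1..K} - U"
  define Z0 where "Z0 = (\<lambda>\<omega>::(nat \<Rightarrow> nat) \<times> (nat \<Rightarrow> bool list). (ans N (fst \<omega> N) (snd \<omega>), fst \<omega> N, restrict_files U (snd \<omega>)))"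
  define AL where "AL = (\<lambda>\<omega>::(nat \<Rightarrow> nat) \<times> (nat \<Rightarrow> bool list). (\<lambda>j. if j \<in> V then ans j (fst \<omega> j) (snd \<omega>) else 0))"
  define Wk where "Wk = (\<lambda>\<omega>::(nat \<Rightarrow> nat) \<times> (nat \<Rightarrow> bool list). snd \<omega> k)"
  have kN: "k \<noteq> N" using k NK by auto
  have rins: "restrict_files (insert k U) w = (restrict_files U w)(k := w k)" for w
    using k by (auto simp: restrict_files_def fun_eq_iff)
  have rU: "(restrict_files (insert k U) w)(k := []) = restrict_files U w" for w
    using k by (auto simp: restrict_files_def fun_eq_iff)
  have rk: "restrict_files (insert k U) w k = w k" for w by (simp add: restrict_files_def)
  have H1: "Hf M (\<lambda>\<omega>. (ans N (fst \<omega> N) (snd \<omega>), fst \<omega> N, restrict_files (insert k U) (snd \<omega>)))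
      = Hf M (\<lambda>\<omega>. (Wk \<omega>, Z0 \<omega>))"
    apply (rule H_eq_fun[OF fin, where \<phi>="\<lambda>(a,an,qn,x). (an,qn,x(k:=a))" and \<psi>="\<lambda>(an,qn,r). (r k, an, qn, r(k:=[]))"])
    using rins[symmetric] rU rk by (auto simp: Wk_def Z0_def)
  have G1: "Hf M (\<lambda>\<omega>. (fst \<omega> N, restrict_files (insert k U) (snd \<omega>)))
      = Hf M (\<lambda>\<omega>. (fst \<omega> N, restrict_files U (snd \<omega>), snd \<omega> k))"
    apply (rule H_eq_fun[OF fin, where \<phi>="\<lambda>(qn,x,a). (qn,x(k:=a))" and \<psi>="\<lambda>(qn,r). (qn, r(k:=[]), r k)"])
    using rins[symmetric] rU rk by auto
  have G1L: "Hf M (\<lambda>\<omega>. (fst \<omega> N, restrict_files U (snd \<omega>), snd \<omega> k))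
       = Hf M (\<lambda>\<omega>. (fst \<omega> N, restrict_files U (snd \<omega>))) + real L"
  proof -
    have "Hf M (\<lambda>\<omega>. (fst \<omega> N, restrict_files U (snd \<omega>), snd \<omega> k))
        = Hf \<pi> (\<lambda>q. q N) + Hf F (\<lambda>w. (restrict_files U w, w k))"
      unfolding M_def using H_pair[OF finpi finF, where f="\<lambda>q. q N" and g="\<lambda>w. (restrict_files U w, w k)"] by simp
    also have "Hf F (\<lambda>w. (restrict_files U w, w k)) = Hf F (restrict_files U) + real L"
      unfolding F_def by (rule files_add_one[OF k])
    also have "Hf M (\<lambda>\<omega>. (fst \<omega> N, restrict_files U (snd \<omega>))) = Hf \<pi> (\<lambda>q. q N) + Hf F (restrict_files U)"
      unfolding M_def using H_pair[OF finpi finF, where f="\<lambda>q. q N" and g="restrict_files U"] by simp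
    ultimately show ?thesis by simp
  qed
  define Dec where "Dec = (\<lambda>(al::nat\<Rightarrow>nat, q::nat\<Rightarrow>nat, an::nat, qn::nat, x::nat\<Rightarrow>bool list).
       dec (k, map q [1..<N+1], map (\<lambda>i. if i = N then an else if i \<in> V then al i else ans i (q i) x) [1..<N+1]))"
  have decW: "Wk \<omega> = Dec (AL \<omega>, fst \<omega>, Z0 \<omega>)" if w: "\<omega> \<in> set_pmf M" for \<omega>
  proof -
    have meq: "map (\<lambda>i. if i = N then ans N (fst \<omega> N) (snd \<omega>) else if i \<in> V then AL \<omega> i
               else ans i (fst \<omega> i) (restrict_files U (snd \<omega>))) [1..<N+1]
        = map (\<lambda>i. ans i (fst \<omega> i) (snd \<omega>)) [1..<N+1]"
    proof (rule map_cong[OF refl])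
      fix i assume "i \<in> set [1..<N+1]"
      hence i: "1 \<le> i" "i \<le> N" by auto
      show "(if i = N then ans N (fst \<omega> N) (snd \<omega>) else if i \<in> V then AL \<omega> i
               else ans i (fst \<omega> i) (restrict_files U (snd \<omega>))) = ans i (fst \<omega> i) (snd \<omega>)"
      proof (cases "i = N \<or> i \<in> V")
        case True then show ?thesis by (cases "i = N") (simp_all add: AL_def)
      next
        case False
        hence iU: "i \<in> U" "i \<noteq> N" using i NK by (auto simp: V_def)
        have st: "\<forall>j\<in>star_stored N i. restrict_files U (snd \<omega>) j = snd \<omega> j"
          using iU by (simp add: star_stored_def restrict_files_def)
        have iN: "i \<in> {1..N}" using i by simp
        have "ans i (fst \<omega> i) (restrict_files U (snd \<omega>)) = ans i (fst \<omega> i) (snd \<omega>)"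
          using stored iN st by blast
        then show ?thesis using False by auto
      qed
    qed
    have d1: "Dec (AL \<omega>, fst \<omega>, Z0 \<omega>) = dec (k, map (fst \<omega>) [1..<N+1], map (\<lambda>i. if i = N then ans N (fst \<omega> N) (snd \<omega>) else if i \<in> V then AL \<omega> i
               else ans i (fst \<omega> i) (restrict_files U (snd \<omega>))) [1..<N+1])"
      by (simp only: Dec_def Z0_def prod.case)
    have "dec (k, map (fst \<omega>) [1..<N+1], map (\<lambda>i. ans i (fst \<omega> i) (snd \<omega>)) [1..<N+1]) = snd \<omega> k"
      using decode w unfolding M_def F_def by blast
    thus ?thesis using d1 meq by (simp only: Wk_def)
  qed
  have a: "Hf M (\<lambda>\<omega>. (fst \<omega>, Wk \<omega>, Z0 \<omega>)) \<le> Hf M (\<lambda>\<omega>. (AL \<omega>, fst \<omega>, Z0 \<omega>))"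
    by (rule H_le_fun[OF fin, where \<phi>="\<lambda>(al,q,z). (q, Dec (al,q,z), z)"]) (simp add: decW)
  have b: "Hf M (\<lambda>\<omega>. (AL \<omega>, fst \<omega>, Z0 \<omega>)) \<le> Hf M AL + Hf M (\<lambda>\<omega>. (fst \<omega>, Z0 \<omega>))"
    using H_subadd[OF fin, of AL "\<lambda>\<omega>. (fst \<omega>, Z0 \<omega>)"] by simp
  have c: "Hf M (\<lambda>\<omega>. (fst \<omega>, Z0 \<omega>)) - Hf M Z0 \<le> Hf M (\<lambda>\<omega>. (fst \<omega>, fst \<omega> N)) - Hf M (\<lambda>\<omega>. fst \<omega> N)"
    by (rule H_cond_mono[OF fin, where \<phi>="\<lambda>(an,qn,x). qn"]) (auto simp: Z0_def)
  have c2: "Hf M (\<lambda>\<omega>. (fst \<omega>, fst \<omega> N)) = Hf M fst"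
    by (rule H_eq_fun[OF fin, where \<phi>="\<lambda>q. (q, q N)" and \<psi>=fst]) auto
  have d: "Hf M (\<lambda>\<omega>. (fst \<omega>, snd \<omega>, fst \<omega> N)) - Hf M (\<lambda>\<omega>. (snd \<omega>, fst \<omega> N))
        \<le> Hf M (\<lambda>\<omega>. (fst \<omega>, Wk \<omega>, Z0 \<omega>)) - Hf M (\<lambda>\<omega>. (Wk \<omega>, Z0 \<omega>))"
    by (rule H_cond_mono[OF fin, where \<phi>="\<lambda>(w,qn). (w k, ans N qn w, qn, restrict_files U w)"])
       (simp add: Z0_def Wk_def)
  have d1: "Hf M (\<lambda>\<omega>. (fst \<omega>, snd \<omega>, fst \<omega> N)) = Hf \<pi> (\<lambda>q. q) + Hf F (\<lambda>w. w)"
  proof -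
    have "Hf M (\<lambda>\<omega>. (fst \<omega>, snd \<omega>, fst \<omega> N)) = Hf M (\<lambda>\<omega>. (fst \<omega>, snd \<omega>))"
      by (rule H_eq_fun[OF fin, where \<phi>="\<lambda>(q,w). (q,w,q N)" and \<psi>="\<lambda>(q,w,_). (q,w)"]) auto
    also have "\<dots> = Hf \<pi> (\<lambda>q. q) + Hf F (\<lambda>w. w)"
      unfolding M_def using H_pair[OF finpi finF, where f="\<lambda>q. q" and g="\<lambda>w. w"] by simp
    finally show ?thesis .
  qed
  have d2: "Hf M (\<lambda>\<omega>. (snd \<omega>, fst \<omega> N)) = Hf \<pi> (\<lambda>q. q N) + Hf F (\<lambda>w. w)"
  proof -
    have "Hf M (\<lambda>\<omega>. (snd \<omega>, fst \<omega> N)) = Hf M (\<lambda>\<omega>. (fst \<omega> N, snd \<omega>))"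
      by (rule H_eq_fun[OF fin, where \<phi>="\<lambda>(a,b). (b,a)" and \<psi>="\<lambda>(a,b). (b,a)"]) auto
    also have "\<dots> = Hf \<pi> (\<lambda>q. q N) + Hf F (\<lambda>w. w)"
      unfolding M_def using H_pair[OF finpi finF, where f="\<lambda>q. q N" and g="\<lambda>w. w"] by simp
    finally show ?thesis .
  qed
  have d3: "Hf M fst = Hf \<pi> (\<lambda>q. q)" unfolding M_def using H_fst[of \<pi> F "\<lambda>q. q"] by simp
  have d4: "Hf M (\<lambda>\<omega>. fst \<omega> N) = Hf \<pi> (\<lambda>q. q N)" unfolding M_def using H_fst[of \<pi> F "\<lambda>q. q N"] by simp
  have e: "Hf M AL \<le> (\<Sum>j\<in>V. Hf M (\<lambda>\<omega>. ans j (fst \<omega> j) (snd \<omega>)))"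
    unfolding AL_def by (rule H_family[OF fin]) (simp add: V_def)
  have main: "Hf M (\<lambda>\<omega>. (Wk \<omega>, Z0 \<omega>)) - Hf M Z0 \<le> (\<Sum>j\<in>V. Hf M (\<lambda>\<omega>. ans j (fst \<omega> j) (snd \<omega>)))"
    using a b c c2 d d1 d2 d3 d4 e by linarith
  show ?thesis
    unfolding Hc_def F_def[symmetric] M_def[symmetric] V_def[symmetric]
    using H1 G1 G1L main by (simp add: Z0_def)
qed

lemma telescope:
  fixes f :: "nat set \<Rightarrow> real"
  assumes "finite I"
  shows "f R - f (R \<union> I) = (\<Sum>k\<in>I. f (R \<union> {j\<in>I. j<k}) - f (insert k (R \<union> {j\<in>I. j<k})))"
  using assms
proof (induction I rule: finite_linorder_max_induct)
  case empty
  then show ?case by simp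
next
  case (insert b A)
  have s1: "(\<Sum>k\<in>insert b A. f (R \<union> {j\<in>insert b A. j<k}) - f (insert k (R \<union> {j\<in>insert b A. j<k})))
      = (f (R \<union> A) - f (insert b (R \<union> A))) + (\<Sum>k\<in>A. f (R \<union> {j\<in>insert b A. j<k}) - f (insert k (R \<union> {j\<in>insert b A. j<k})))"
  proof -
    have bA: "b \<notin> A" using insert.hyps(2) by auto
    have "{j\<in>insert b A. j<b} = A" using insert.hyps(2) by auto
    thus ?thesis using bA insert.hyps(1) by (simp add: sum.insert)
  qed
  have s2: "(\<Sum>k\<in>A. f (R \<union> {j\<in>insert b A. j<k}) - f (insert k (R \<union> {j\<in>insert b A. j<k})))
      = (\<Sum>k\<in>A. f (R \<union> {j\<in>A. j<k}) - f (insert k (R \<union> {j\<in>A. j<k})))"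
  proof (rule sum.cong[OF refl])
    fix k assume "k \<in> A"
    hence "{j\<in>insert b A. j<k} = {j\<in>A. j<k}" using insert.hyps(2) by auto
    thus "f (R \<union> {j\<in>insert b A. j<k}) - f (insert k (R \<union> {j\<in>insert b A. j<k}))
        = f (R \<union> {j\<in>A. j<k}) - f (insert k (R \<union> {j\<in>A. j<k}))" by simp
  qed
  have "insert b (R \<union> A) = R \<union> insert b A" by auto
  then show ?case using s1 s2 insert.IH by simp
qed

lemma H_pair_map:
  "Hf (pair_pmf A B) (\<lambda>\<omega>. G (h (fst \<omega>)) (snd \<omega>)) = Hf (pair_pmf (map_pmf h A) B) (\<lambda>\<omega>. G (fst \<omega>) (snd \<omega>))"
proof -
  have "pair_pmf (map_pmf h A) B = map_pmf (\<lambda>(a,b). (h a, b)) (pair_pmf A B)"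
    using map_pair[of h "\<lambda>x. x" A B] by (simp add: pmf.map_ident)
  thus ?thesis by (simp add: Hf_map case_prod_beta)
qed

definition Hcm :: "nat \<Rightarrow> (nat \<Rightarrow> nat \<Rightarrow> (nat \<Rightarrow> bool list) \<Rightarrow> nat) \<Rightarrow> (nat \<times> (nat \<Rightarrow> bool list)) pmf \<Rightarrow> nat set \<Rightarrow> real" where
  "Hcm N ans M S = Hf M (\<lambda>\<omega>. (ans N (fst \<omega>) (snd \<omega>), fst \<omega>, restrict_files S (snd \<omega>)))
                 - Hf M (\<lambda>\<omega>. (fst \<omega>, restrict_files S (snd \<omega>)))"

lemma Hc_Hcm: "Hc N ans (pair_pmf \<pi> B) S = Hcm N ans (pair_pmf (map_pmf (\<lambda>q. q N) \<pi>) B) S"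
proof -
  have 1: "Hf (pair_pmf \<pi> B) (\<lambda>\<omega>. (ans N (fst \<omega> N) (snd \<omega>), fst \<omega> N, restrict_files S (snd \<omega>)))
     = Hf (pair_pmf (map_pmf (\<lambda>q. q N) \<pi>) B) (\<lambda>\<omega>. (ans N (fst \<omega>) (snd \<omega>), fst \<omega>, restrict_files S (snd \<omega>)))"
    using H_pair_map[where G="\<lambda>q w. (ans N q w, q, restrict_files S w)" and h="\<lambda>q. q N" and A=\<pi> and B=B] by simp
  have 2: "Hf (pair_pmf \<pi> B) (\<lambda>\<omega>. (fst \<omega> N, restrict_files S (snd \<omega>)))
     = Hf (pair_pmf (map_pmf (\<lambda>q. q N) \<pi>) B) (\<lambda>\<omega>. (fst \<omega>, restrict_files S (snd \<omega>)))"
    using H_pair_map[where G="\<lambda>q w. (q, restrict_files S w)" and h="\<lambda>q. q N" and A=\<pi> and B=B] by simp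
  show ?thesis unfolding Hc_def Hcm_def 1 2 ..
qed

lemma Hcm_bounds:
  assumes "finite (set_pmf M)"
  shows "Hcm N ans M S \<le> Hf M (\<lambda>\<omega>. ans N (fst \<omega>) (snd \<omega>))" "Hcm N ans M S \<ge> 0"
  unfolding Hcm_def
  using H_subadd[OF assms, of "\<lambda>\<omega>. ans N (fst \<omega>) (snd \<omega>)" "\<lambda>\<omega>. (fst \<omega>, restrict_files S (snd \<omega>))"]
    H_le_pair[OF assms, of "\<lambda>\<omega>. (fst \<omega>, restrict_files S (snd \<omega>))" "\<lambda>\<omega>. ans N (fst \<omega>) (snd \<omega>)"]
  by simp_all


definition aJ :: "nat \<Rightarrow> nat \<Rightarrow> (nat \<times> (nat \<Rightarrow> nat)) pmf \<Rightarrow> (nat \<Rightarrow> nat \<Rightarrow> (nat \<Rightarrow> bool list) \<Rightarrow> nat) \<Rightarrow> nat \<Rightarrow> real" where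
  "aJ N L P ans i = Hf (pair_pmf P (files_dist (N - 1) L)) (\<lambda>\<omega>. ans i (snd (fst \<omega>) i) (snd \<omega>))"

lemma main_ineq:
  assumes sch: "star_pir_scheme N L P ans" and N2: "N \<ge> 2" and I: "I \<subseteq> {1..N-1}"
  shows "(\<Sum>k\<in>I. real L - (\<Sum>j\<in>I. aJ N L P ans j)) \<le> aJ N L P ans N"
proof -
  define K where "K = N - 1"
  have NK: "N = Suc K" and K1: "K \<ge> 1" using N2 by (auto simp: K_def)
  define F where "F = files_dist K L"
  define J where "J = pair_pmf P F"
  have finF: "finite (set_pmf F)" by (simp add: F_def files_dist_fin)
  have finP: "finite (set_pmf P)" and unif: "map_pmf fst P = pmf_of_set {1..K}"
    and stored: "\<forall>i\<in>{1..N}. \<forall>q w w'. (\<forall>j\<in>star_stored N i. w j = w' j) \<longrightarrow> ans i q w = ans i q w'"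
    and decE: "\<exists>dec. \<forall>\<omega>\<in>set_pmf J.
          dec (fst (fst \<omega>), map (snd (fst \<omega>)) [1..<N+1],
               map (\<lambda>i. ans i (snd (fst \<omega>) i) (snd \<omega>)) [1..<N+1])
          = snd \<omega> (fst (fst \<omega>))"
    and priv: "\<forall>i\<in>{1..N}.
          cond_entropy J (\<lambda>\<omega>. fst (fst \<omega>))
            (\<lambda>\<omega>. (snd (fst \<omega>) i, restrict_files (star_stored N i) (snd \<omega>)))
          = log 2 (real K)"
    using sch unfolding star_pir_scheme_def Let_def K_def[symmetric] F_def[symmetric] J_def[symmetric] by auto
  obtain dec where dec: "\<forall>\<omega>\<in>set_pmf J.
          dec (fst (fst \<omega>), map (snd (fst \<omega>)) [1..<N+1],
               map (\<lambda>i. ans i (snd (fst \<omega>) i) (snd \<omega>)) [1..<N+1])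
          = snd \<omega> (fst (fst \<omega>))" using decE by blast
  have finJ: "finite (set_pmf J)" using finP finF by (simp add: J_def set_pair_pmf)
  define \<mu> where "\<mu> = (\<lambda>i. map_pmf (\<lambda>p. snd p i) P)"
  have HPfst: "Hf J (\<lambda>\<omega>. g (fst \<omega>)) = Hf P g" for g :: "nat \<times> (nat \<Rightarrow> nat) \<Rightarrow> 'x"
    unfolding J_def by (rule H_fst)
  have Htheta: "Hf P fst = log 2 (real K)"
    using K1 by (simp add: Hf_def unif entropy_uniform)
  have pmf_theta: "pmf (map_pmf fst P) k = 1 / real K" if "k \<in> {1..K}" for k
    using that K1 by (simp add: unif)
  have indep: "pmf (map_pmf (\<lambda>p. (fst p, snd p i)) P) (a, b) = pmf (map_pmf fst P) a * pmf (\<mu> i) b"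
    if i: "i \<in> {1..N}" for i a b
  proof -
    define Y where "Y = (\<lambda>\<omega>::(nat \<times> (nat \<Rightarrow> nat)) \<times> (nat \<Rightarrow> bool list). (snd (fst \<omega>) i, restrict_files (star_stored N i) (snd \<omega>)))"
    have c1: "Hf J (\<lambda>\<omega>. (fst (fst \<omega>), Y \<omega>)) - Hf J Y = log 2 (real K)"
      using priv i by (simp add: cond_entropy_def Hf_def Y_def)
    have c2: "Hf J (\<lambda>\<omega>. (fst (fst \<omega>), Y \<omega>)) - Hf J Y
        \<le> Hf J (\<lambda>\<omega>. (fst (fst \<omega>), snd (fst \<omega>) i)) - Hf J (\<lambda>\<omega>. snd (fst \<omega>) i)"
      by (rule H_cond_mono[OF finJ, where \<phi>=fst]) (simp add: Y_def)
    have c3: "Hf J (\<lambda>\<omega>. (fst (fst \<omega>), snd (fst \<omega>) i)) \<le> Hf J (\<lambda>\<omega>. fst (fst \<omega>)) + Hf J (\<lambda>\<omega>. snd (fst \<omega>) i)"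
      by (rule H_subadd[OF finJ])
    have e1: "Hf J (\<lambda>\<omega>. (fst (fst \<omega>), snd (fst \<omega>) i)) = Hf P (\<lambda>p. (fst p, snd p i))"
      using HPfst[of "\<lambda>p. (fst p, snd p i)"] by simp
    have e2: "Hf J (\<lambda>\<omega>. fst (fst \<omega>)) = Hf P fst" using HPfst[of fst] by simp
    have e3: "Hf J (\<lambda>\<omega>. snd (fst \<omega>) i) = Hf P (\<lambda>p. snd p i)" using HPfst[of "\<lambda>p. snd p i"] by simp
    have "Hf P (\<lambda>p. (fst p, snd p i)) = Hf P fst + Hf P (\<lambda>p. snd p i)"
      using c1 c2 c3 e1 e2 e3 Htheta by linarith
    from H_indep_eq[OF finP this] show ?thesis by (simp add: \<mu>_def)
  qed
  define \<pi> where "\<pi> = (\<lambda>k. map_pmf snd (cond_pmf P {p. fst p = k}))"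
  have ne: "set_pmf P \<inter> {p. fst p = k} \<noteq> {}" if "k \<in> {1..K}" for k
  proof -
    have "pmf (map_pmf fst P) k > 0" using pmf_theta[OF that] K1 by simp
    hence "k \<in> set_pmf (map_pmf fst P)" by (meson pmf_positive_iff)
    thus ?thesis by auto
  qed
  have pimap: "map_pmf (\<lambda>q. q i) (\<pi> k) = \<mu> i" if k: "k \<in> {1..K}" and i: "i \<in> {1..N}" for k i
  proof -
    have "map_pmf (\<lambda>p. snd p i) (cond_pmf P {p. fst p = k}) = map_pmf (\<lambda>p. snd p i) P"
      by (rule cond_marginal[OF finP]) (use indep[OF i] pmf_theta[OF k] K1 \<mu>_def in auto)
    thus ?thesis by (simp add: \<pi>_def \<mu>_def pmf.map_comp o_def)
  qed
  have finpi: "finite (set_pmf (\<pi> k))" if "k \<in> {1..K}" for k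
    using finP ne[OF that] by (simp add: \<pi>_def)
  have deck: "\<forall>\<omega>\<in>set_pmf (pair_pmf (\<pi> k) (files_dist K L)).
        dec (k, map (fst \<omega>) [1..<N+1], map (\<lambda>i. ans i (fst \<omega> i) (snd \<omega>)) [1..<N+1]) = snd \<omega> k"
    if k: "k \<in> {1..K}" for k
  proof
    fix \<omega> assume w: "\<omega> \<in> set_pmf (pair_pmf (\<pi> k) (files_dist K L))"
    then obtain q w' where om: "\<omega> = (q, w')" and q: "q \<in> set_pmf (\<pi> k)" and w': "w' \<in> set_pmf F"
      by (auto simp: set_pair_pmf F_def)
    from q have "(k, q) \<in> set_pmf P" using ne[OF k] by (auto simp: \<pi>_def)
    hence "((k,q), w') \<in> set_pmf J" using w' by (simp add: J_def set_pair_pmf)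
    from dec[rule_format, OF this] show "dec (k, map (fst \<omega>) [1..<N+1], map (\<lambda>i. ans i (fst \<omega> i) (snd \<omega>)) [1..<N+1]) = snd \<omega> k"
      by (simp add: om)
  qed
  define b where "b = (\<lambda>j. Hf (pair_pmf (\<mu> j) F) (\<lambda>\<omega>. ans j (fst \<omega>) (snd \<omega>)))"
  have aJb: "aJ N L P ans j = b j" for j
    unfolding aJ_def b_def \<mu>_def K_def[symmetric] F_def[symmetric]
    using H_pair_map[where G="\<lambda>q w. ans j q w" and h="\<lambda>p. snd p j" and A=P and B=F] by simp
  have bnn: "b j \<ge> 0" for j by (simp add: b_def H_nonneg)
  define f where "f = Hcm N ans (pair_pmf (\<mu> N) F)"
  have finmu: "finite (set_pmf (pair_pmf (\<mu> N) F))" using finP finF by (simp add: \<mu>_def set_pair_pmf)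
  have finI: "finite I" using I by (rule finite_subset) simp
  define R where "R = {1..K} - I"
  have step: "real L - (\<Sum>j\<in>I. b j) \<le> f (R \<union> {j\<in>I. j<k}) - f (insert k (R \<union> {j\<in>I. j<k}))"
    if kI: "k \<in> I" for k
  proof -
    have k: "k \<in> {1..K}" using kI I K_def by auto
    define U where "U = R \<union> {j\<in>I. j<k}"
    have IK: "I \<subseteq> {1..K}" using I by (simp add: K_def)
    have kU: "k \<notin> U" and U: "U \<subseteq> {1..K}" using kI IK by (auto simp: U_def R_def)
    have NN: "N \<in> {1..N}" using N2 by simp
    have pk: "Hc N ans (pair_pmf (\<pi> k) (files_dist K L)) U - Hc N ans (pair_pmf (\<pi> k) (files_dist K L)) (insert k U)
         \<ge> real L - (\<Sum>j\<in>{1..K} - U. Hf (pair_pmf (\<pi> k) (files_dist K L)) (\<lambda>\<omega>. ans j (fst \<omega> j) (snd \<omega>)))"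
      by (rule per_k[OF finpi[OF k] NK stored deck[OF k] k kU U])
    have hc: "Hc N ans (pair_pmf (\<pi> k) F) S = f S" for S
      unfolding f_def Hc_Hcm pimap[OF k NN] ..
    have hb: "Hf (pair_pmf (\<pi> k) F) (\<lambda>\<omega>. ans j (fst \<omega> j) (snd \<omega>)) = b j" if "j \<in> {1..K}" for j
    proof -
      have j: "j \<in> {1..N}" using that NK by auto
      show ?thesis
        using H_pair_map[where G="\<lambda>q w. ans j q w" and h="\<lambda>q. q j" and A="\<pi> k" and B=F] pimap[OF k j]
        by (simp add: b_def)
    qed
    have "(\<Sum>j\<in>{1..K} - U. Hf (pair_pmf (\<pi> k) F) (\<lambda>\<omega>. ans j (fst \<omega> j) (snd \<omega>))) = (\<Sum>j\<in>{1..K} - U. b j)"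
      by (rule sum.cong) (auto simp: hb)
    also have "\<dots> \<le> (\<Sum>j\<in>I. b j)"
      by (rule sum_mono2[OF finI]) (auto simp: U_def R_def bnn)
    finally show ?thesis using pk unfolding F_def[symmetric] hc U_def by linarith
  qed
  have "(\<Sum>k\<in>I. real L - (\<Sum>j\<in>I. b j)) \<le> (\<Sum>k\<in>I. f (R \<union> {j\<in>I. j<k}) - f (insert k (R \<union> {j\<in>I. j<k})))"
    by (rule sum_mono) (rule step)
  also have "\<dots> = f R - f (R \<union> I)" by (rule telescope[OF finI, symmetric])
  also have "\<dots> \<le> b N"
    using Hcm_bounds[OF finmu, of N ans R] Hcm_bounds[OF finmu, of N ans "R \<union> I"]
    by (simp add: f_def b_def)
  finally show ?thesis by (simp add: aJb)
qed

lemma rate_bound: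
  assumes sch: "star_pir_scheme N L P ans" and N5: "N \<ge> 5" and L1: "L \<ge> 1"
  shows "star_pir_rate N L P ans \<le> 4 / sqrt (real (N - 1))"
proof -
  define K where "K = N - 1"
  have K4: "K \<ge> 4" using N5 by (simp add: K_def)
  define a where "a = aJ N L P ans"
  have ann: "a j \<ge> 0" for j by (simp add: a_def aJ_def H_nonneg)
  define T where "T = (\<Sum>j\<in>{1..K}. a j)"
  have Tnn: "T \<ge> 0" unfolding T_def by (rule sum_nonneg) (simp add: ann)
  have D: "(\<Sum>i\<in>{1..N}. pmf_entropy (map_pmf (\<lambda>\<omega>. ans i (snd (fst \<omega>) i) (snd \<omega>))
                      (pair_pmf P (files_dist (N - 1) L)))) = T + a N"
  proof -
    have "{1..N} = insert N {1..K}" using N5 by (auto simp: K_def)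
    moreover have "N \<notin> {1..K}" using N5 by (simp add: K_def)
    ultimately show ?thesis by (simp add: T_def a_def aJ_def Hf_def add.commute)
  qed
  define G where "G = {j\<in>{1..K}. a j \<le> 2 * T / K}"
  have Kpos: "real K > 0" using K4 by simp
  have cardG: "real (card G) \<ge> real K / 2"
  proof (cases "T = 0")
    case True
    have "G = {1..K}" using True ann by (auto simp: G_def T_def sum_nonneg_eq_0_iff)
    then show ?thesis by simp
  next
    case False
    hence Tp: "T > 0" using Tnn by simp
    have "real (card ({1..K} - G)) * (2 * T / K) = (\<Sum>j\<in>{1..K} - G. 2 * T / K)" by simp
    also have "\<dots> \<le> (\<Sum>j\<in>{1..K} - G. a j)" by (rule sum_mono) (auto simp: G_def)
    also have "\<dots> \<le> T" unfolding T_def by (rule sum_mono2) (auto simp: ann)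
    finally have "real (card ({1..K} - G)) * (2 * T / K) \<le> T" .
    hence "real (card ({1..K} - G)) * 2 \<le> K" using Tp Kpos by (simp add: field_simps)
    moreover have "card ({1..K} - G) = K - card G" by (subst card_Diff_subset) (auto simp: G_def)
    moreover have "card G \<le> K"
    proof -
      have "G \<subseteq> {1..K}" by (auto simp: G_def)
      from card_mono[OF _ this] show ?thesis by simp
    qed
    ultimately show ?thesis by (simp add: of_nat_diff)
  qed
  define m where "m = nat \<lfloor>sqrt (real K)\<rfloor>"
  have sK2: "sqrt (real K) \<ge> 2" using K4 by (simp add: real_le_rsqrt)
  have sqK: "sqrt (real K) * sqrt (real K) = real K" by simp
  have m_le: "real m \<le> sqrt (real K)" unfolding m_def by simp
  have m_ge: "real m \<ge> sqrt (real K) - 1" unfolding m_def using sK2 by linarith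
  have m2: "real m * real m \<le> real K" using m_le sqK by (metis mult_mono of_nat_0_le_iff order_trans real_sqrt_ge_zero)
  have "2 * sqrt (real K) \<le> sqrt (real K) * sqrt (real K)" using sK2 by (intro mult_right_mono) auto
  hence "sqrt (real K) \<le> real K / 2" using sqK by linarith
  hence "real m \<le> real (card G)" using m_le cardG by linarith
  hence "m \<le> card G" by simp
  then obtain I where IG: "I \<subseteq> G" and cI: "card I = m" and finI: "finite I"
    by (rule obtain_subset_with_card_n)
  have IK: "I \<subseteq> {1..N-1}" using IG by (auto simp: G_def K_def)
  have SI: "(\<Sum>j\<in>I. a j) \<le> real m * (2 * T / K)"
  proof -
    have "(\<Sum>j\<in>I. a j) \<le> (\<Sum>j\<in>I. 2 * T / K)" by (rule sum_mono) (use IG in \<open>auto simp: G_def\<close>)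
    thus ?thesis using cI by simp
  qed
  have mi: "(\<Sum>k\<in>I. real L - (\<Sum>j\<in>I. a j)) \<le> a N"
    unfolding a_def by (rule main_ineq[OF sch _ IK]) (use N5 in simp)
  hence "real m * (real L - (\<Sum>j\<in>I. a j)) \<le> a N" using cI by simp
  moreover have "real m * (\<Sum>j\<in>I. a j) \<le> 2 * T"
  proof -
    have "real m * (\<Sum>j\<in>I. a j) \<le> real m * (real m * (2 * T / K))" using SI by (intro mult_left_mono) auto
    also have "\<dots> = (real m * real m) * (2 * T) / K" by simp
    also have "\<dots> \<le> real K * (2 * T) / K" using m2 Tnn Kpos by (intro divide_right_mono mult_right_mono) auto
    also have "\<dots> = 2 * T" using Kpos by simp
    finally show ?thesis .
  qed
  ultimately have "real m * real L \<le> a N + 2 * T" by (simp add: algebra_simps)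
  hence Dlow: "real m * real L \<le> 2 * (T + a N)" using ann[of N] Tnn by (smt (verit))
  have "sqrt (real K) / 2 * real L \<le> real m * real L" using m_ge sK2 L1 by (intro mult_right_mono) auto
  hence Dl2: "sqrt (real K) * real L \<le> 4 * (T + a N)" using Dlow by linarith
  have Dpos: "T + a N > 0" using Dl2 sK2 L1
    by (smt (verit) mult_pos_pos of_nat_0_less_iff less_le_trans zero_less_one)
  have "star_pir_rate N L P ans = real L / (T + a N)" unfolding star_pir_rate_def D ..
  also have "\<dots> \<le> 4 / sqrt (real K)"
    using Dl2 Dpos sK2 K4 by (simp add: divide_simps) (simp add: algebra_simps)
  finally show ?thesis by (simp add: K_def)
qed

lemma scheme_exists:
  assumes N2: "N \<ge> 2"
  shows "\<exists>P ans. star_pir_scheme N L P ans"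
proof -
  define K where "K = N - 1"
  have K1: "K \<ge> 1" and NK: "N = Suc K" using N2 by (auto simp: K_def)
  define P where "P = map_pmf (\<lambda>t. (t, \<lambda>_::nat. 0::nat)) (pmf_of_set {1..K})"
  define ans where "ans = (\<lambda>i (q::nat) (w::nat \<Rightarrow> bool list). if i < N then to_nat (w i) else (0::nat))"
  define dec where "dec = (\<lambda>(t::nat, qs::nat list, as::nat list). (from_nat (as ! (t - 1)) :: bool list))"
  define F where "F = files_dist K L"
  define J where "J = pair_pmf P F"
  have setU: "set_pmf (pmf_of_set {1..K}) = {1..K}" using K1 by simp
  have setP: "set_pmf P = (\<lambda>t. (t, \<lambda>_. 0)) ` {1..K}" unfolding P_def set_map_pmf setU ..
  have finP: "finite (set_pmf P)" by (simp add: setP)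
  have finF: "finite (set_pmf F)" by (simp add: F_def files_dist_fin)
  have mfst: "map_pmf fst P = pmf_of_set {1..K}" by (simp add: P_def pmf.map_comp o_def)
  have stored: "\<forall>i\<in>{1..N}. \<forall>q w w'. (\<forall>j\<in>star_stored N i. w j = w' j) \<longrightarrow> ans i q w = ans i q w'"
    by (auto simp: ans_def star_stored_def)
  have decok: "\<forall>\<omega>\<in>set_pmf J.
          dec (fst (fst \<omega>), map (snd (fst \<omega>)) [1..<N+1],
               map (\<lambda>i. ans i (snd (fst \<omega>) i) (snd \<omega>)) [1..<N+1])
          = snd \<omega> (fst (fst \<omega>))"
  proof
    fix \<omega> assume "\<omega> \<in> set_pmf J"
    then obtain t w where om: "\<omega> = ((t, \<lambda>_. 0), w)" and t: "t \<in> {1..K}"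
      by (auto simp: J_def set_pair_pmf setP)
    have tl: "t - 1 < length [1..<N+1]" using t NK by auto
    have "map (\<lambda>i. ans i 0 w) [1..<N+1] ! (t - 1) = ans ([1..<N+1] ! (t - 1)) 0 w"
      by (rule nth_map[OF tl[simplified length_map]])
    also have "[1..<N+1] ! (t - 1) = t" using t NK by (subst nth_upt) auto
    finally show "dec (fst (fst \<omega>), map (snd (fst \<omega>)) [1..<N+1],
               map (\<lambda>i. ans i (snd (fst \<omega>) i) (snd \<omega>)) [1..<N+1])
          = snd \<omega> (fst (fst \<omega>))"
      using t NK by (simp add: om dec_def ans_def)
  qed
  have priv: "cond_entropy J (\<lambda>\<omega>. fst (fst \<omega>))
            (\<lambda>\<omega>. (snd (fst \<omega>) i, restrict_files (star_stored N i) (snd \<omega>)))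
          = log 2 (real K)" for i
  proof -
    define R where "R = restrict_files (star_stored N i)"
    have "cond_entropy J (\<lambda>\<omega>. fst (fst \<omega>)) (\<lambda>\<omega>. (snd (fst \<omega>) i, R (snd \<omega>)))
        = Hf J (\<lambda>\<omega>. (fst (fst \<omega>), snd (fst \<omega>) i, R (snd \<omega>))) - Hf J (\<lambda>\<omega>. (snd (fst \<omega>) i, R (snd \<omega>)))"
      by (simp add: cond_entropy_def Hf_def)
    also have "Hf J (\<lambda>\<omega>. (fst (fst \<omega>), snd (fst \<omega>) i, R (snd \<omega>))) = Hf J (\<lambda>\<omega>. (fst (fst \<omega>), (0::nat, R (snd \<omega>))))"
      by (rule H_cong) (auto simp: J_def set_pair_pmf setP)
    also have "\<dots> = Hf P fst + Hf F (\<lambda>w. (0::nat, R w))"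
      unfolding J_def using H_pair[OF finP finF, where f=fst and g="\<lambda>w. (0::nat, R w)"] by simp
    also have "Hf J (\<lambda>\<omega>. (snd (fst \<omega>) i, R (snd \<omega>))) = Hf J (\<lambda>\<omega>. (0::nat, R (snd \<omega>)))"
      by (rule H_cong) (auto simp: J_def set_pair_pmf setP)
    also have "\<dots> = Hf F (\<lambda>w. (0::nat, R w))"
      unfolding J_def using H_snd[of P F "\<lambda>w. (0::nat, R w)"] by simp
    also have "Hf P fst = log 2 (real K)" using K1 by (simp add: Hf_def mfst entropy_uniform)
    finally show ?thesis by (simp add: R_def)
  qed
  have "star_pir_scheme N L P ans"
    unfolding star_pir_scheme_def Let_def K_def[symmetric] F_def[symmetric] J_def[symmetric]
    using finP mfst stored decok priv by blast
  thus ?thesis by blast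
qed

lemma rate_nonneg: "star_pir_rate N L P ans \<ge> 0"
  unfolding star_pir_rate_def
  by (intro divide_nonneg_nonneg sum_nonneg) (auto simp: H_nonneg[unfolded Hf_def])

lemma sqrt_bound:
  assumes "N \<ge> (2::nat)"
  shows "4 / sqrt (real (N - 1)) \<le> 8 / sqrt (real N)"
proof -
  have p1: "sqrt (real (N - 1)) > 0" using assms by simp
  have p2: "sqrt (real N) > 0" using assms by simp
  have "real N \<le> 4 * real (N - 1)" using assms by (simp add: of_nat_diff)
  hence "sqrt (real N) \<le> sqrt (4 * real (N - 1))" by (rule real_sqrt_le_mono)
  also have "sqrt (4 * real (N - 1)) = 2 * sqrt (real (N - 1))" by (simp add: real_sqrt_mult)
  finally have "sqrt (real N) \<le> 2 * sqrt (real (N - 1))" .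
  thus ?thesis using p1 p2 by (simp add: divide_simps)
qed

lemma cap_bound:
  assumes N5: "N \<ge> 5"
  shows "0 \<le> star_pir_capacity N \<and> star_pir_capacity N \<le> 8 / sqrt (real N)"
proof -
  define RS where "RS = {star_pir_rate N L P ans | L P ans. L \<ge> 1 \<and> star_pir_scheme N L P ans}"
  obtain P ans where sch: "star_pir_scheme N 1 P ans" using scheme_exists[of N 1] N5 by auto
  have x0: "star_pir_rate N 1 P ans \<in> RS" unfolding RS_def using sch by blast
  have ub: "x \<le> 4 / sqrt (real (N - 1))" if "x \<in> RS" for x
    using that rate_bound N5 unfolding RS_def by blast
  have ne: "RS \<noteq> {}" using x0 by blast
  have bdd: "bdd_above RS" using ub by (rule bdd_aboveI)
  have "star_pir_capacity N = Sup RS" by (simp add: star_pir_capacity_def RS_def)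
  moreover have "Sup RS \<le> 4 / sqrt (real (N - 1))" by (rule cSup_least[OF ne ub])
  moreover have "star_pir_rate N 1 P ans \<le> Sup RS" by (rule cSup_upper[OF x0 bdd])
  moreover have "4 / sqrt (real (N - 1)) \<le> 8 / sqrt (real N)" using N5 by (intro sqrt_bound) simp
  ultimately show ?thesis using rate_nonneg[of N 1 P ans] by linarith
qed

theorem theorem3:
  shows "star_pir_capacity \<in> O(\<lambda>N. 1 / sqrt (real N))"
proof (rule bigoI[where c=8])
  show "\<forall>\<^sub>F N in at_top. norm (star_pir_capacity N) \<le> 8 * norm (1 / sqrt (real N))"
  proof (rule eventually_mono[OF eventually_ge_at_top[of 5]])
    fix N :: nat assume "5 \<le> N"
    from cap_bound[OF this] show "norm (star_pir_capacity N) \<le> 8 * norm (1 / sqrt (real N))"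
      by simp
  qed
qed

end
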